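(* As formal power series in $x,y$, $$F(x,y) = \frac{x}{y}\left(\frac{G(y)}{1-F(x,y)} - \frac{G(0)}{1-F(x,0)}\right),$$ where the bracket on the right-hand side vanishes at $y=0$ so the division by $y$ is legitimate. Moreover this equation determines $F$ uniquely.
   Context: Let $\mu$ be a probability law on $\{0,1,2,\dots\}$, $\mu_k=\mu(\{k\})$, $G(t)=\sum_k\mu_kt^k$. Parking rule on a finite rooted tree with car arrival numbers $(a_x)$ at its vertices: each vertex holds at most one car; each car goes to its arrival vertex, parks there if free, otherwise drives towards the root and parks at the first free vertex on its way, and exits through the root if none is found (the final configuration does not depend on the order of the cars). A fully parked tree is a finite rooted plane tree $\mathbf t$ together with nonnegative integers $(a_x)_{x\in\mathbf t}$ (car arrivals) such that in the final configuration every vertex is occupied; its number of outgoing cars is the number of cars exiting through the root. Let $\mathbb T_n^{(k)}$ be the set of fully parked trees with $n$ vertices and $k$ outgoing cars, $w(\mathbf t)=\prod_{x\in\mathbf t}\mu_{a_x}$, and $F(x,y)=\sum_{n\ge1}\sum_{k\ge0}\sum_{\mathbf t\in\mathbb T_n^{(k)}} w(\mathbf t)x^ny^k.$ *)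

theory Defs
  imports "HOL-Computational_Algebra.Formal_Power_Series"
begin

text \<open>Finite rooted plane trees decorated with car arrival numbers:
  Node a ts is a vertex with a cars arriving at it and ordered list of subtrees ts.\<close>
datatype ptree = Node nat "ptree list"

fun psize :: "ptree \<Rightarrow> nat" where
  "psize (Node a ts) = Suc (sum_list (map psize ts))"

fun outflow :: "ptree \<Rightarrow> nat" where
  "outflow (Node a ts) = (a + sum_list (map outflow ts)) - 1"

fun fully_parked :: "ptree \<Rightarrow> bool" where
  "fully_parked (Node a ts) =
     ((\<forall>t\<in>set ts. fully_parked t) \<and> 1 \<le> a + sum_list (map outflow ts))"

fun pweight :: "(nat \<Rightarrow> real) \<Rightarrow> ptree \<Rightarrow> real" where
  "pweight \<mu> (Node a ts) = \<mu> a * prod_list (map (pweight \<mu>) ts)"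

text \<open>Bivariate series in R[[y]][[x]]: outer variable x, inner variable y.\<close>
definition Fser :: "(nat \<Rightarrow> real) \<Rightarrow> real fps fps" where
  "Fser \<mu> = Abs_fps (\<lambda>n. Abs_fps (\<lambda>k.
      \<Sum>t\<in>{t. fully_parked t \<and> psize t = n \<and> outflow t = k}. pweight \<mu> t))"

definition at_y0 :: "real fps fps \<Rightarrow> real fps fps" where
  "at_y0 H = Abs_fps (\<lambda>n. fps_const (fps_nth (fps_nth H n) 0))"

definition Gy :: "(nat \<Rightarrow> real) \<Rightarrow> real fps fps" where
  "Gy \<mu> = fps_const (Abs_fps \<mu>)"

definition G0 :: "(nat \<Rightarrow> real) \<Rightarrow> real fps fps" where
  "G0 \<mu> = fps_const (fps_const (\<mu> 0))"

definition Yv :: "real fps fps" where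
  "Yv = fps_const fps_X"

definition bracket :: "(nat \<Rightarrow> real) \<Rightarrow> real fps fps \<Rightarrow> real fps fps" where
  "bracket \<mu> H = Gy \<mu> * inverse (1 - H) - G0 \<mu> * inverse (1 - at_y0 H)"

text \<open>The functional equation, with the division by y cleared (y * H = x * bracket).\<close>
definition parking_eq :: "(nat \<Rightarrow> real) \<Rightarrow> real fps fps \<Rightarrow> bool" where
  "parking_eq \<mu> H \<longleftrightarrow>
     Yv * H = fps_X * bracket \<mu> H"

end

theory Submission
  imports Defs
begin

definition TT where "TT n k = {t. fully_parked t \<and> psize t = n \<and> outflow t = k}"
definition FF where "FF n k = {ts. (\<forall>t\<in>set ts. fully_parked t) \<and> sum_list (map psize ts) = n \<and> sum_list (map outflow ts) = k}"
definition ff where "ff \<mu> n k = sum (pweight \<mu>) (TT n k)"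
definition ll where "ll \<mu> n k = (\<Sum>ts\<in>FF n k. prod_list (map (pweight \<mu>) ts))"

lemma psize_pos: "psize t \<ge> 1" by (cases t) auto
lemma psize_ne0[simp]: "psize t \<noteq> 0" by (cases t) auto

lemma len_le: "length ts \<le> sum_list (map psize ts)"
proof (induct ts)
  case (Cons a ts) then show ?case using psize_pos[of a] by simp
qed simp

lemma elem_le: "x \<in> set xs \<Longrightarrow> (f x::nat) \<le> sum_list (map f xs)"
  by (induct xs) auto

lemma fin_S: "finite {t. fully_parked t \<and> psize t \<le> n \<and> outflow t \<le> k}"
proof (induct n arbitrary: k)
  case 0
  have "{t. fully_parked t \<and> psize t \<le> 0 \<and> outflow t \<le> k} = {}"
    by auto
  then show ?case by simp
next
  case (Suc n)
  let ?S = "{t. fully_parked t \<and> psize t \<le> n \<and> outflow t \<le> Suc k}"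
  have fin: "finite ?S" using Suc.hyps .
  have "{t. fully_parked t \<and> psize t \<le> Suc n \<and> outflow t \<le> k} \<subseteq>
     (\<lambda>(a,ts). Node a ts) ` ({..Suc k} \<times> {ts. set ts \<subseteq> ?S \<and> length ts \<le> n})"
  proof
    fix t assume t: "t \<in> {t. fully_parked t \<and> psize t \<le> Suc n \<and> outflow t \<le> k}"
    obtain a ts where tt: "t = Node a ts" by (cases t)
    from t tt have fp: "\<forall>u\<in>set ts. fully_parked u" "1 \<le> a + sum_list (map outflow ts)"
      and sz: "sum_list (map psize ts) \<le> n" and o: "a + sum_list (map outflow ts) - 1 \<le> k" by auto
    have "a \<le> Suc k" using fp o by arith
    moreover have "set ts \<subseteq> ?S"
    proof
      fix u assume u: "u \<in> set ts"
      have "psize u \<le> sum_list (map psize ts)" "outflow u \<le> sum_list (map outflow ts)"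
        using elem_le[OF u] by auto
      then show "u \<in> ?S" using u fp sz o by auto
    qed
    moreover have "length ts \<le> n" using len_le[of ts] sz by arith
    ultimately show "t \<in> (\<lambda>(a,ts). Node a ts) ` ({..Suc k} \<times> {ts. set ts \<subseteq> ?S \<and> length ts \<le> n})"
      using tt by (auto intro!: image_eqI[where x="(a,ts)"])
  qed
  moreover have "finite ((\<lambda>(a,ts). Node a ts) ` ({..Suc k} \<times> {ts. set ts \<subseteq> ?S \<and> length ts \<le> n}))"
    by (intro finite_imageI finite_cartesian_product finite_atMost finite_lists_length_le fin)
  ultimately show ?case by (rule finite_subset)
qed

lemma fin_TT: "finite (TT n k)"
  by (rule finite_subset[OF _ fin_S[of n k]]) (auto simp: TT_def)

lemma fin_FF: "finite (FF n k)"
proof (rule finite_subset[OF _ finite_lists_length_le[OF fin_S[of n k], of n]])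
  show "FF n k \<subseteq> {xs. set xs \<subseteq> {t. fully_parked t \<and> psize t \<le> n \<and> outflow t \<le> k} \<and> length xs \<le> n}"
  proof
    fix ts assume ts: "ts \<in> FF n k"
    have "set ts \<subseteq> {t. fully_parked t \<and> psize t \<le> n \<and> outflow t \<le> k}"
    proof
      fix u assume u: "u \<in> set ts"
      have "psize u \<le> sum_list (map psize ts)" "outflow u \<le> sum_list (map outflow ts)"
        using elem_le[OF u] by auto
      then show "u \<in> {t. fully_parked t \<and> psize t \<le> n \<and> outflow t \<le> k}" using u ts by (auto simp: FF_def)
    qed
    moreover have "length ts \<le> n" using len_le[of ts] ts by (auto simp: FF_def)
    ultimately show "ts \<in> {xs. set xs \<subseteq> {t. fully_parked t \<and> psize t \<le> n \<and> outflow t \<le> k} \<and> length xs \<le> n}" by auto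
  qed
qed

lemma TT_0: "TT 0 k = {}"
  by (auto simp: TT_def)

lemma ff_0: "ff \<mu> 0 k = 0" by (simp add: ff_def TT_0)

lemma TT_Suc: "TT (Suc n) k = (\<lambda>(a,ts). Node a ts) ` (SIGMA a:{0..Suc k}. FF n (Suc k - a))"
proof
  show "TT (Suc n) k \<subseteq> (\<lambda>(a,ts). Node a ts) ` (SIGMA a:{0..Suc k}. FF n (Suc k - a))"
  proof
    fix t assume t: "t \<in> TT (Suc n) k"
    obtain a ts where tt: "t = Node a ts" by (cases t)
    from t tt have "a \<le> Suc k" "ts \<in> FF n (Suc k - a)" by (auto simp: TT_def FF_def)
    then show "t \<in> (\<lambda>(a,ts). Node a ts) ` (SIGMA a:{0..Suc k}. FF n (Suc k - a))"
      using tt by (auto intro!: image_eqI[where x="(a,ts)"])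
  qed
next
  show "(\<lambda>(a,ts). Node a ts) ` (SIGMA a:{0..Suc k}. FF n (Suc k - a)) \<subseteq> TT (Suc n) k"
    by (auto simp: TT_def FF_def)
qed

lemma ff_Suc: "ff \<mu> (Suc n) k = (\<Sum>a=0..Suc k. \<mu> a * ll \<mu> n (Suc k - a))"
proof -
  have inj: "inj_on (\<lambda>(a,ts). Node a ts) (SIGMA a:{0..Suc k}. FF n (Suc k - a))"
    by (auto simp: inj_on_def)
  have "ff \<mu> (Suc n) k = (\<Sum>p\<in>(SIGMA a:{0..Suc k}. FF n (Suc k - a)). pweight \<mu> (case p of (a,ts) \<Rightarrow> Node a ts))"
    unfolding ff_def TT_Suc by (subst sum.reindex[OF inj]) (simp add: comp_def)
  also have "\<dots> = (\<Sum>a=0..Suc k. \<Sum>ts\<in>FF n (Suc k - a). \<mu> a * prod_list (map (pweight \<mu>) ts))"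
    by (subst sum.Sigma) (auto simp: fin_FF intro!: sum.cong split: prod.splits)
  also have "\<dots> = (\<Sum>a=0..Suc k. \<mu> a * ll \<mu> n (Suc k - a))"
    by (simp add: ll_def sum_distrib_left)
  finally show ?thesis .
qed

definition PP where "PP n k = (SIGMA p:{0..n}\<times>{0..k}. SIGMA t: TT (fst p) (snd p). FF (n - fst p) (k - snd p))"

lemma FF_decomp: "FF n k = (if n = 0 \<and> k = 0 then {[]} else {}) \<union> (\<lambda>(p,(t,ts)). t#ts) ` PP n k"
proof
  show "FF n k \<subseteq> (if n = 0 \<and> k = 0 then {[]} else {}) \<union> (\<lambda>(p,(t,ts)). t#ts) ` PP n k"
  proof
    fix ts assume ts: "ts \<in> FF n k"
    show "ts \<in> (if n = 0 \<and> k = 0 then {[]} else {}) \<union> (\<lambda>(p,(t,ts)). t#ts) ` PP n k"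
    proof (cases ts)
      case Nil then show ?thesis using ts by (auto simp: FF_def)
    next
      case (Cons t ts')
      have "((psize t, outflow t), (t, ts')) \<in> PP n k"
        using ts Cons by (auto simp: PP_def FF_def TT_def)
      then show ?thesis using Cons by (auto intro!: image_eqI[where x="((psize t, outflow t), (t, ts'))"])
    qed
  qed
next
  show "(if n = 0 \<and> k = 0 then {[]} else {}) \<union> (\<lambda>(p,(t,ts)). t#ts) ` PP n k \<subseteq> FF n k"
    by (auto simp: PP_def FF_def TT_def)
qed

lemma ll_eq: "ll \<mu> n k = (if n = 0 \<and> k = 0 then 1 else 0) +
   (\<Sum>i=0..n. \<Sum>j=0..k. ff \<mu> i j * ll \<mu> (n - i) (k - j))"
proof -
  let ?w = "\<lambda>ts. prod_list (map (pweight \<mu>) ts)"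
  have finP: "finite (PP n k)" by (auto simp: PP_def fin_TT fin_FF intro!: finite_SigmaI)
  have inj: "inj_on (\<lambda>(p,(t,ts)). t#ts) (PP n k)"
    by (auto simp: inj_on_def PP_def TT_def)
  have disj: "(if n = 0 \<and> k = 0 then {[]} else {}) \<inter> (\<lambda>(p,(t,ts)). t#ts) ` PP n k = {}" by auto
  have "ll \<mu> n k = sum ?w (if n = 0 \<and> k = 0 then {[]} else {}) + sum ?w ((\<lambda>(p,(t,ts)). t#ts) ` PP n k)"
    unfolding ll_def by (subst FF_decomp) (rule sum.union_disjoint, auto intro: finite_imageI finP)
  also have "sum ?w (if n = 0 \<and> k = 0 then {[]} else {}) = (if n = 0 \<and> k = 0 then 1 else 0)" by simp
  also have "sum ?w ((\<lambda>(p,(t,ts)). t#ts) ` PP n k) = (\<Sum>q\<in>PP n k. ?w (case q of (p,(t,ts)) \<Rightarrow> t#ts))"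
    by (subst sum.reindex[OF inj]) (simp add: comp_def)
  also have "\<dots> = (\<Sum>p\<in>{0..n}\<times>{0..k}. \<Sum>q\<in>(SIGMA t: TT (fst p) (snd p). FF (n - fst p) (k - snd p)). ?w (fst q # snd q))"
    unfolding PP_def by (subst sum.Sigma) (auto simp: fin_TT fin_FF intro!: finite_SigmaI sum.cong split: prod.splits)
  also have "\<dots> = (\<Sum>p\<in>{0..n}\<times>{0..k}. ff \<mu> (fst p) (snd p) * ll \<mu> (n - fst p) (k - snd p))"
  proof (rule sum.cong[OF refl])
    fix p :: "nat \<times> nat"
    have "(\<Sum>q\<in>(SIGMA t: TT (fst p) (snd p). FF (n - fst p) (k - snd p)). ?w (fst q # snd q))
       = (\<Sum>t\<in>TT (fst p) (snd p). \<Sum>ts\<in>FF (n - fst p) (k - snd p). pweight \<mu> t * ?w ts)"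
      by (subst sum.Sigma) (auto simp: fin_TT fin_FF intro!: sum.cong split: prod.splits)
    also have "\<dots> = ff \<mu> (fst p) (snd p) * ll \<mu> (n - fst p) (k - snd p)"
      by (simp add: ff_def ll_def sum_product)
    finally show "(\<Sum>q\<in>(SIGMA t: TT (fst p) (snd p). FF (n - fst p) (k - snd p)). ?w (fst q # snd q))
       = ff \<mu> (fst p) (snd p) * ll \<mu> (n - fst p) (k - snd p)" .
  qed
  also have "\<dots> = (\<Sum>i=0..n. \<Sum>j=0..k. ff \<mu> i j * ll \<mu> (n - i) (k - j))"
    by (simp add: sum.cartesian_product split_def)
  finally show ?thesis .
qed



notation fps_nth (infixl "\<frown>" 75)

definition Lser where "Lser \<mu> = Abs_fps (\<lambda>n. Abs_fps (\<lambda>k. ll \<mu> n k))"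

lemma Fser_nth: "Fser \<mu> \<frown> n \<frown> k = ff \<mu> n k" by (simp add: Fser_def ff_def TT_def)
lemma Lser_nth: "Lser \<mu> \<frown> n \<frown> k = ll \<mu> n k" by (simp add: Lser_def)

lemma Fser0: "Fser \<mu> \<frown> 0 = 0" by (rule fps_ext) (simp add: Fser_nth ff_0)

lemma L_eq: "Lser \<mu> = 1 + Fser \<mu> * Lser \<mu>"
proof (rule fps_ext, rule fps_ext)
  fix n k
  show "Lser \<mu> \<frown> n \<frown> k = (1 + Fser \<mu> * Lser \<mu>) \<frown> n \<frown> k"
    by (subst Lser_nth, subst ll_eq) (simp add: fps_mult_nth fps_sum_nth Fser_nth Lser_nth)
qed

lemma inv_one_fps: "inverse (1::real fps) = 1"
  by (rule fps_inverse_unique) simp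

lemma inv_unique:
  fixes A B :: "real fps fps"
  assumes "A \<frown> 0 = 1" "B * A = 1"
  shows "inverse A = B"
proof -
  have "A * fps_right_inverse A (inverse (A \<frown> 0)) = 1"
    by (rule fps_right_inverse) (simp add: assms inv_one_fps)
  then have AI: "A * inverse A = 1" by (simp add: fps_inverse_def)
  have "B = B * (A * inverse A)" by (simp add: AI)
  also have "\<dots> = (B * A) * inverse A" by (simp add: mult.assoc)
  finally show ?thesis using assms by simp
qed

lemma at_y0_nth: "at_y0 H \<frown> n = fps_const (H \<frown> n \<frown> 0)" by (simp add: at_y0_def)

lemma at_y0_mult: "at_y0 (A * B) = at_y0 A * at_y0 B"
proof (rule fps_ext, rule fps_ext)
  fix n m
  show "at_y0 (A * B) \<frown> n \<frown> m = (at_y0 A * at_y0 B) \<frown> n \<frown> m"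
    by (simp add: at_y0_nth fps_mult_nth fps_sum_nth)
qed

lemma at_y0_diff: "at_y0 (A - B) = at_y0 A - at_y0 B"
  by (rule fps_ext) (simp add: at_y0_nth)

lemma at_y0_one: "at_y0 1 = 1"
  by (rule fps_ext) (simp add: at_y0_nth)

lemma LF: "Lser \<mu> * (1 - Fser \<mu>) = 1"
proof -
  have "Lser \<mu> * (1 - Fser \<mu>) = Lser \<mu> - Fser \<mu> * Lser \<mu>" by (simp add: algebra_simps)
  also have "\<dots> = 1" using L_eq[of \<mu>] by (simp add: algebra_simps)
  finally show "Lser \<mu> * (1 - Fser \<mu>) = 1" .
qed

lemma invF: "inverse (1 - Fser \<mu>) = Lser \<mu>"
  by (rule inv_unique) (simp_all add: Fser0 LF)

lemma invF0: "inverse (1 - at_y0 (Fser \<mu>)) = at_y0 (Lser \<mu>)"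
proof (rule inv_unique)
  show "(1 - at_y0 (Fser \<mu>)) \<frown> 0 = 1" by (simp add: Fser0 at_y0_nth)
  have "at_y0 (Lser \<mu>) * (1 - at_y0 (Fser \<mu>)) = at_y0 (Lser \<mu> * (1 - Fser \<mu>))"
    by (simp add: at_y0_mult at_y0_diff at_y0_one)
  also have "Lser \<mu> * (1 - Fser \<mu>) = 1"
    by (rule LF)
  finally show "at_y0 (Lser \<mu>) * (1 - at_y0 (Fser \<mu>)) = 1" by (simp add: at_y0_one)
qed

lemma bracketF: "bracket \<mu> (Fser \<mu>) = Gy \<mu> * Lser \<mu> - G0 \<mu> * at_y0 (Lser \<mu>)"
  by (simp add: bracket_def invF invF0)

lemma bracketF_nth: "bracket \<mu> (Fser \<mu>) \<frown> n = Abs_fps \<mu> * Lser \<mu> \<frown> n - fps_const (\<mu> 0 * Lser \<mu> \<frown> n \<frown> 0)"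
  by (simp add: bracketF Gy_def G0_def at_y0_nth)

lemma part1: "at_y0 (bracket \<mu> (Fser \<mu>)) = 0"
  by (rule fps_ext) (simp add: at_y0_nth bracketF_nth)

lemma part2: "parking_eq \<mu> (Fser \<mu>)"
  unfolding parking_eq_def
proof (rule fps_ext)
  fix n
  show "(Yv * Fser \<mu>) \<frown> n = (fps_X * bracket \<mu> (Fser \<mu>)) \<frown> n"
  proof (cases n)
    case 0 then show ?thesis by (simp add: Yv_def Fser0)
  next
    case (Suc m)
    have "fps_X * Fser \<mu> \<frown> Suc m = bracket \<mu> (Fser \<mu>) \<frown> m"
    proof (rule fps_ext)
      fix k
      show "(fps_X * Fser \<mu> \<frown> Suc m) \<frown> k = bracket \<mu> (Fser \<mu>) \<frown> m \<frown> k"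
      proof (cases k)
        case 0 then show ?thesis by (simp add: bracketF_nth Lser_nth)
      next
        case (Suc k')
        then show ?thesis
          proof -
          have "(fps_X * Fser \<mu> \<frown> Suc m) \<frown> k = ff \<mu> (Suc m) k'" by (simp add: Suc Fser_nth)
          moreover have "bracket \<mu> (Fser \<mu>) \<frown> m \<frown> k = (\<Sum>i=0..k. \<mu> i * ll \<mu> m (k - i))"
            using Suc by (simp add: bracketF_nth Lser_nth fps_mult_nth del: fps_X_mult_nth)
          ultimately show ?thesis using Suc by (simp add: ff_Suc)
        qed
      qed
    qed
    then show ?thesis using Suc by (simp add: Yv_def)
  qed
qed

definition agree :: "nat \<Rightarrow> 'a fps \<Rightarrow> 'a fps \<Rightarrow> bool" where
  "agree m A B \<longleftrightarrow> (\<forall>i\<le>m. A \<frown> i = B \<frown> i)"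

lemma agree_mult:
  fixes A B C D :: "'a::comm_ring_1 fps"
  shows "agree m A B \<Longrightarrow> agree m C D \<Longrightarrow> agree m (A * C) (B * D)"
  unfolding agree_def fps_mult_nth by (auto intro!: sum.cong)

lemma agree_diff:
  fixes A B C D :: "'a::comm_ring_1 fps"
  shows "agree m A B \<Longrightarrow> agree m C D \<Longrightarrow> agree m (A - C) (B - D)"
  unfolding agree_def by auto

lemma agree_refl: "agree m A A" by (simp add: agree_def)

lemma agree_at_y0: "agree m A B \<Longrightarrow> agree m (at_y0 A) (at_y0 B)"
  unfolding agree_def by (simp add: at_y0_nth)

lemma constr_local:
  fixes A B :: "'a::{comm_monoid_add,times,uminus} fps"
  assumes "\<forall>i\<le>m. A \<frown> i = B \<frown> i"
  shows "i \<le> m \<Longrightarrow> fps_right_inverse_constructor A c i = fps_right_inverse_constructor B c i"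
proof (induct i rule: less_induct)
  case (less i)
  show ?case
  proof (cases i)
    case 0 then show ?thesis by simp
  next
    case (Suc j)
    have "(\<Sum>l=1..i. A \<frown> l * fps_right_inverse_constructor A c (i - l)) =
          (\<Sum>l=1..i. B \<frown> l * fps_right_inverse_constructor B c (i - l))"
      using less assms Suc by (intro sum.cong) auto
    then show ?thesis using Suc by simp
  qed
qed

lemma agree_inverse:
  fixes A B :: "'a::{comm_monoid_add,times,uminus,inverse} fps"
  shows "agree m A B \<Longrightarrow> agree m (inverse A) (inverse B)"
  unfolding agree_def fps_inverse_def
  proof (intro allI impI)
  fix i assume A: "\<forall>i\<le>m. A \<frown> i = B \<frown> i" and i: "i \<le> m"
  have "A \<frown> 0 = B \<frown> 0" using A by simp
  then show "Abs_fps (natfun_inverse A) \<frown> i = Abs_fps (natfun_inverse B) \<frown> i"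
    using constr_local[OF A i, of "inverse (A \<frown> 0)"] by simp
qed

lemma agree_bracket: "agree m H K \<Longrightarrow> agree m (bracket \<mu> H) (bracket \<mu> K)"
  unfolding bracket_def
  by (intro agree_diff agree_mult agree_refl agree_inverse agree_at_y0)

lemma part3:
  assumes H: "parking_eq \<mu> H"
  shows "H = Fser \<mu>"
proof -
  have F: "parking_eq \<mu> (Fser \<mu>)" by (rule part2)
  have X: "fps_X * a = fps_X * b \<Longrightarrow> a = b" for a b :: "real fps"
    by (simp add: fps_X_neq_zero)
  have "agree m H (Fser \<mu>)" for m
  proof (induct m)
    case 0
    have "(Yv * H) \<frown> 0 = (fps_X * bracket \<mu> H) \<frown> 0" using H by (simp add: parking_eq_def)
    then have "fps_X * H \<frown> 0 = fps_X * Fser \<mu> \<frown> 0" by (simp add: Yv_def Fser0)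
    then show ?case using X by (simp add: agree_def)
  next
    case (Suc m)
    have "agree m (bracket \<mu> H) (bracket \<mu> (Fser \<mu>))" using Suc agree_bracket by blast
    then have "bracket \<mu> H \<frown> m = bracket \<mu> (Fser \<mu>) \<frown> m" by (simp add: agree_def)
    moreover have "(Yv * H) \<frown> Suc m = (fps_X * bracket \<mu> H) \<frown> Suc m" using H by (simp add: parking_eq_def)
    moreover have "(Yv * Fser \<mu>) \<frown> Suc m = (fps_X * bracket \<mu> (Fser \<mu>)) \<frown> Suc m" using F by (simp add: parking_eq_def)
    ultimately have "fps_X * H \<frown> Suc m = fps_X * Fser \<mu> \<frown> Suc m" by (simp add: Yv_def)
    then have "H \<frown> Suc m = Fser \<mu> \<frown> Suc m" using X by blast
    then show ?case using Suc by (auto simp: agree_def le_Suc_eq)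
  qed
  then show ?thesis by (auto simp: agree_def intro: fps_ext)
qed

theorem mainTheorem5:
  fixes \<mu> :: "nat \<Rightarrow> real"
  assumes "\<And>k. 0 \<le> \<mu> k" and "\<mu> sums 1"
  shows "at_y0 (bracket \<mu> (Fser \<mu>)) = 0 \<and> parking_eq \<mu> (Fser \<mu>) \<and> (\<forall>H. parking_eq \<mu> H \<longrightarrow> H = Fser \<mu>)"
  using part1 part2 part3 by blast

end
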